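(* Let $n\ge 3$ and let $D_n=\langle \rho,\tau \mid \rho^n=\tau^2=1,\ \tau\rho\tau=\rho^{-1}\rangle$ be the dihedral group of order $2n$. Let $0<i<j<n$ and $X=\mathrm{Cay}(D_n;\{\tau,\rho^i\tau,\rho^j\tau\})$. Then $X$ is connected if and only if $\gcd(n,i,j)=1$. Moreover, if $\gcd(n,i,j)=1$ and $m=\gcd(n,i)$, then $X$ is isomorphic to the honeycomb toroidal graph $\mathrm{HTG}(m,2n/m,\ell)$ for some integer $\ell$.
   Context: For a finite group $G$ and $S\subset G$ with $1\notin S$ and $S=S^{-1}$, the Cayley graph $\mathrm{Cay}(G;S)$ has vertex set $G$, with $g$ adjacent to $h$ iff $h=gs$ for some $s\in S$. Honeycomb toroidal graph: let $m\ge 1$ be an integer, $n'\ge 4$ an even integer, and $\ell$ an integer with $\ell\equiv m \pmod 2$. The graph $\mathrm{HTG}(m,n',\ell)$ has vertex set $\{u_{a,b}: 0\le a\le m-1,\ b\in\mathbb{Z}_{n'}\}$ and edges: vertical edges $u_{a,b}u_{a,b+1}$ for all $a,b$; flat edges $u_{a,b}u_{a+1,b}$ for $0\le a\le m-2$ and all $b$ with $a+b$ odd; jump edges $u_{m-1,b}u_{0,b+\ell}$ for all $b$ with $b\equiv m\pmod 2$ (second subscripts modulo $n'$). *)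

theory Defs
  imports "HOL-Algebra.Group"
begin

text \<open>Dihedral group of order 2n: element (k, e) stands for rho^k tau^e,
  with k in {0..<n} and e = True meaning a factor tau.
  Multiplication: rho^a tau^e * rho^b tau^f = rho^(a + (-1)^e b) tau^(e xor f).\<close>
definition dihedral :: "nat \<Rightarrow> (int \<times> bool) monoid" where
  "dihedral n = \<lparr> carrier = {0..<int n} \<times> UNIV,
     mult = (\<lambda>(a, e) (b, f). ((a + (if e then - b else b)) mod int n, e \<noteq> f)),
     one = (0, False) \<rparr>"

definition drho :: "int \<times> bool" where "drho = (1, False)"
definition dtau :: "int \<times> bool" where "dtau = (0, True)"

definition cayley_adj :: "('a, 'b) monoid_scheme \<Rightarrow> 'a set \<Rightarrow> 'a \<Rightarrow> 'a \<Rightarrow> bool" where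
  "cayley_adj G S g h \<longleftrightarrow> g \<in> carrier G \<and> h \<in> carrier G \<and> (\<exists>s\<in>S. h = g \<otimes>\<^bsub>G\<^esub> s)"

definition graph_connected :: "'a set \<Rightarrow> ('a \<Rightarrow> 'a \<Rightarrow> bool) \<Rightarrow> bool" where
  "graph_connected V E \<longleftrightarrow>
     (\<forall>x\<in>V. \<forall>y\<in>V. (\<lambda>a b. a \<in> V \<and> b \<in> V \<and> E a b)\<^sup>*\<^sup>* x y)"

definition graph_iso :: "'a set \<Rightarrow> ('a \<Rightarrow> 'a \<Rightarrow> bool) \<Rightarrow> 'b set \<Rightarrow> ('b \<Rightarrow> 'b \<Rightarrow> bool) \<Rightarrow> bool" where
  "graph_iso V1 E1 V2 E2 \<longleftrightarrow>
     (\<exists>f. bij_betw f V1 V2 \<and> (\<forall>x\<in>V1. \<forall>y\<in>V1. E1 x y \<longleftrightarrow> E2 (f x) (f y)))"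

text \<open>Honeycomb toroidal graph HTG(m, n', l): vertex u_{a,b} is (a, b) with
  0 \<le> a \<le> m-1 and b in {0..<n'} (second subscripts taken mod n').\<close>
definition htg_verts :: "int \<Rightarrow> int \<Rightarrow> (int \<times> int) set" where
  "htg_verts m n' = {0..<m} \<times> {0..<n'}"

definition htg_edge :: "int \<Rightarrow> int \<Rightarrow> int \<Rightarrow> int \<times> int \<Rightarrow> int \<times> int \<Rightarrow> bool" where
  "htg_edge m n' l x y \<longleftrightarrow> x \<in> htg_verts m n' \<and> y \<in> htg_verts m n' \<and>
     ( \<comment> \<open>vertical edges\<close>
       (fst y = fst x \<and> snd y = (snd x + 1) mod n')
       \<comment> \<open>flat edges\<close>
     \<or> (fst x \<le> m - 2 \<and> odd (fst x + snd x) \<and> fst y = fst x + 1 \<and> snd y = snd x)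
       \<comment> \<open>jump edges\<close>
     \<or> (fst x = m - 1 \<and> snd x mod 2 = m mod 2 \<and> fst y = 0 \<and> snd y = (snd x + l) mod n'))"

definition htg_adj :: "int \<Rightarrow> int \<Rightarrow> int \<Rightarrow> int \<times> int \<Rightarrow> int \<times> int \<Rightarrow> bool" where
  "htg_adj m n' l x y \<longleftrightarrow> htg_edge m n' l x y \<or> htg_edge m n' l y x"

end

theory Submission
  imports Defs
begin


lemma dmult: "(x, e) \<otimes>\<^bsub>dihedral n\<^esub> (c, f) = ((x + (if e then - c else c)) mod int n, e \<noteq> f)"
  by (simp add: dihedral_def)

lemma dcarrier: "carrier (dihedral n) = {0..<int n} \<times> UNIV"
  by (simp add: dihedral_def)

lemma drho_pow: "drho [^]\<^bsub>dihedral n\<^esub> k = (int k mod int n, False)"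
proof (induction k)
  case 0 then show ?case by (simp add: dihedral_def)
next
  case (Suc k)
  then show ?case by (simp add: dmult drho_def mod_add_right_eq add.commute)
qed

lemma S_eq:
  assumes "i < n" "j < n"
  shows "{dtau, drho [^]\<^bsub>dihedral n\<^esub> i \<otimes>\<^bsub>dihedral n\<^esub> dtau,
                  drho [^]\<^bsub>dihedral n\<^esub> j \<otimes>\<^bsub>dihedral n\<^esub> dtau}
     = {(0, True), (int i, True), (int j, True)}"
  using assms by (simp add: drho_pow dtau_def dmult)

lemma inv2:
  assumes "x \<in> carrier (dihedral n)"
  shows "(x \<otimes>\<^bsub>dihedral n\<^esub> (c, True)) \<otimes>\<^bsub>dihedral n\<^esub> (c, True) = x"
proof -
  obtain y e where x: "x = (y, e)" by fastforce
  have "0 \<le> y" "y < int n" using assms x by (auto simp: dcarrier)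
  then show ?thesis using x by (cases e) (simp_all add: dmult mod_add_left_eq mod_diff_left_eq mod_pos_pos_trivial)
qed

lemma adj_iff:
  "cayley_adj (dihedral n) {(0, True), (c1, True), (c2, True)} x y \<longleftrightarrow>
     x \<in> carrier (dihedral n) \<and> y \<in> carrier (dihedral n) \<and>
     (\<exists>c\<in>{0, c1, c2}. y = x \<otimes>\<^bsub>dihedral n\<^esub> (c, True))"
  unfolding cayley_adj_def by auto

lemma adj_sym:
  "cayley_adj (dihedral n) {(0, True), (c1, True), (c2, True)} x y \<Longrightarrow>
   cayley_adj (dihedral n) {(0, True), (c1, True), (c2, True)} y x"
proof -
  assume "cayley_adj (dihedral n) {(0, True), (c1, True), (c2, True)} x y"
  then obtain c where c: "c \<in> {0, c1, c2}" "y = x \<otimes>\<^bsub>dihedral n\<^esub> (c, True)"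
    and xy: "x \<in> carrier (dihedral n)" "y \<in> carrier (dihedral n)" unfolding adj_iff by blast
  then have "x = y \<otimes>\<^bsub>dihedral n\<^esub> (c, True)" using inv2[OF xy(1)] by simp
  then show ?thesis using c xy unfolding adj_iff by blast
qed

lemma rtranclp_sym:
  assumes "\<And>a b. R a b \<Longrightarrow> R b a" "R\<^sup>*\<^sup>* x y"
  shows "R\<^sup>*\<^sup>* y x"
  using assms(2)
proof (induction rule: rtranclp.induct)
  case (rtrancl_refl a) then show ?case by simp
next
  case (rtrancl_into_rtrancl a b c)
  then show ?case using assms(1) by (meson converse_rtranclp_into_rtranclp)
qed

lemma bezout3:
  fixes a b c :: int
  assumes "gcd a (gcd b c) = 1"
  shows "\<exists>u v w. u * a + v * b + w * c = 1"
proof -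
  obtain u1 v1 where 1: "u1 * a + v1 * gcd b c = 1" using bezout_int[of a "gcd b c"] assms by auto
  obtain u2 v2 where 2: "u2 * b + v2 * c = gcd b c" using bezout_int[of b c] by auto
  have "u1 * a + (v1*u2) * b + (v1*v2) * c = u1 * a + v1 * (u2 * b + v2 * c)"
    by (simp add: algebra_simps)
  then have "u1 * a + (v1*u2) * b + (v1*v2) * c = 1" using 1 2 by simp
  then show ?thesis by blast
qed

locale dsetup =
  fixes n i j :: nat
  assumes n3: "n \<ge> 3" and i0: "0 < i" and ij: "i < j" and jn: "j < n"
begin

abbreviation "D \<equiv> dihedral n"
abbreviation "V \<equiv> carrier D"
abbreviation "S' \<equiv> {(0::int, True), (int i, True), (int j, True)}"
abbreviation "Rel \<equiv> (\<lambda>a b. a \<in> V \<and> b \<in> V \<and> cayley_adj D S' a b)"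

lemma Rel_sym: "Rel a b \<Longrightarrow> Rel b a"
  using adj_sym by blast

lemma step:
  assumes "x \<in> {0..<int n}" "c \<in> {int i, int j}"
  shows "Rel\<^sup>*\<^sup>* (x, False) ((x + c) mod int n, False)"
proof -
  have np: "int n > 0" using n3 by simp
  have a: "Rel (x, False) ((x + c) mod int n, True)"
    using assms np unfolding adj_iff by (auto simp: dmult dcarrier)
  have b: "Rel ((x + c) mod int n, True) ((x + c) mod int n, False)"
    using assms np unfolding adj_iff by (auto simp: dmult dcarrier intro!: bexI[of _ 0])
  have "Rel\<^sup>*\<^sup>* (x,False) ((x + c) mod int n, True)" using a by (rule r_into_rtranclp)
  then show ?thesis using b by (rule rtranclp.rtrancl_into_rtrancl)
qed

lemma steps:
  assumes "x \<in> {0..<int n}" "c \<in> {int i, int j}"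
  shows "Rel\<^sup>*\<^sup>* (x, False) ((x + int p * c) mod int n, False)"
proof (induction p)
  case 0
  then show ?case using assms by simp
next
  case (Suc p)
  have np: "int n > 0" using n3 by simp
  have "Rel\<^sup>*\<^sup>* ((x + int p * c) mod int n, False) (((x + int p * c) mod int n + c) mod int n, False)"
    using step[of "(x + int p * c) mod int n" c] assms np by simp
  moreover have "((x + int p * c) mod int n + c) mod int n = (x + int (Suc p) * c) mod int n"
    by (simp add: mod_add_left_eq mod_add_right_eq algebra_simps)
  ultimately have "Rel\<^sup>*\<^sup>* ((x + int p * c) mod int n, False) ((x + int (Suc p) * c) mod int n, False)" by simp
  with Suc show ?case by (rule rtranclp_trans)
qed

lemma reach_all:
  assumes g: "gcd n (gcd i j) = 1" and y: "y \<in> V"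
  shows "Rel\<^sup>*\<^sup>* (0, False) y"
proof -
  have np: "int n > 0" using n3 by simp
  obtain x e where ye: "y = (x, e)" by fastforce
  have x: "0 \<le> x" "x < int n" using y ye by (auto simp: dcarrier)
  have "gcd (int n) (gcd (int i) (int j)) = 1" using g by simp
  from bezout3[OF this] obtain u v w where uvw: "u * int n + v * int i + w * int j = 1" by blast
  define p where "p = nat ((x * v) mod int n)"
  define q where "q = nat ((x * w) mod int n)"
  have pq: "(int p * int i + int q * int j) mod int n = x"
  proof -
    have "(int p * int i + int q * int j) mod int n = (((x * v) mod int n) * int i + ((x*w) mod int n) * int j) mod int n"
      using np by (simp add: p_def q_def)
    also have "\<dots> = (((x * v) mod int n * int i) mod int n + ((x*w) mod int n * int j) mod int n) mod int n"
      by (rule mod_add_eq[symmetric])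
    also have "\<dots> = (((x * v) * int i) mod int n + ((x*w) * int j) mod int n) mod int n"
      by (simp only: mod_mult_left_eq)
    also have "\<dots> = ((x * v) * int i + (x*w) * int j) mod int n"
      by (rule mod_add_eq)
    also have "\<dots> = (x - (x*u) * int n) mod int n"
    proof -
      have h: "x * (u * int n + v * int i + w * int j) = x" using uvw by simp
      have "(x * v) * int i + (x*w) * int j = x - (x*u) * int n"
        using h by (simp add: algebra_simps)
      then show ?thesis by simp
    qed
    also have "\<dots> = x mod int n" by (simp add: mod_eq_dvd_iff)
    also have "\<dots> = x" using x by simp
    finally show ?thesis .
  qed
  have r1: "Rel\<^sup>*\<^sup>* (0, False) ((int p * int i) mod int n, False)"
    using steps[of 0 "int i" p] np by simp
  have r2: "Rel\<^sup>*\<^sup>* ((int p * int i) mod int n, False) (((int p * int i) mod int n + int q * int j) mod int n, False)"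
    using steps[of "(int p * int i) mod int n" "int j" q] np by simp
  have "((int p * int i) mod int n + int q * int j) mod int n = x"
    using pq by (simp add: mod_add_left_eq)
  then have r2': "Rel\<^sup>*\<^sup>* ((int p * int i) mod int n, False) (x, False)" using r2 by simp
  have rF: "Rel\<^sup>*\<^sup>* (0, False) (x, False)" using r1 r2' by (rule rtranclp_trans)
  show ?thesis
  proof (cases e)
    case False then show ?thesis using rF ye by simp
  next
    case True
    have "Rel (x, False) (x, True)"
      using x unfolding adj_iff by (auto simp: dmult dcarrier mod_pos_pos_trivial intro!: bexI[of _ 0])
    with rF have "Rel\<^sup>*\<^sup>* (0, False) (x, True)" by (rule rtranclp.rtrancl_into_rtrancl)
    then show ?thesis using ye True by simp
  qed
qed

lemma connected_if:
  assumes "gcd n (gcd i j) = 1"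
  shows "graph_connected V (cayley_adj D S')"
  unfolding graph_connected_def
proof (intro ballI)
  fix x y assume "x \<in> V" "y \<in> V"
  then have 1: "Rel\<^sup>*\<^sup>* (0, False) x" "Rel\<^sup>*\<^sup>* (0, False) y"
    using reach_all[OF assms] by blast+
  have "Rel\<^sup>*\<^sup>* x (0, False)"
    by (rule rtranclp_sym[where R=Rel, OF _ 1(1)]) (rule Rel_sym)
  with 1(2) have "Rel\<^sup>*\<^sup>* x (0, False)" "Rel\<^sup>*\<^sup>* (0, False) y" by auto
  then show "Rel\<^sup>*\<^sup>* x y" by (rule rtranclp_trans)
qed

lemma invariant:
  assumes "Rel\<^sup>*\<^sup>* a b"
  shows "fst a mod int (gcd n (gcd i j)) = fst b mod int (gcd n (gcd i j))"
  using assms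
proof (induction rule: rtranclp.induct)
  case (rtrancl_refl a) then show ?case by simp
next
  case (rtrancl_into_rtrancl a b c)
  define d where "d = int (gcd n (gcd i j))"
  have dn: "d dvd int n" unfolding d_def int_dvd_int_iff by (rule gcd_dvd1)
  have di: "d dvd int i" unfolding d_def int_dvd_int_iff by (meson gcd_dvd1 gcd_dvd2 dvd_trans)
  have dj: "d dvd int j" unfolding d_def int_dvd_int_iff by (meson gcd_dvd2 dvd_trans)
  obtain x e where b: "b = (x, e)" by fastforce
  obtain c' where c': "c' \<in> {0, int i, int j}" "c = b \<otimes>\<^bsub>D\<^esub> (c', True)"
    using rtrancl_into_rtrancl(2) unfolding adj_iff by blast
  have dc: "d dvd c'" using c' di dj by auto
  have "fst c mod d = (x + (if e then - c' else c')) mod d"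
    using c' b dn by (simp add: dmult mod_mod_cancel)
  also have "\<dots> = x mod d" using dc
    by (auto simp: mod_eq_dvd_iff)
  finally show ?case using rtrancl_into_rtrancl(3) b d_def by simp
qed

lemma connected_only_if:
  assumes "graph_connected V (cayley_adj D S')"
  shows "gcd n (gcd i j) = 1"
proof -
  have "(0, False) \<in> V" "(1, False) \<in> V" using n3 by (auto simp: dcarrier)
  then have "Rel\<^sup>*\<^sup>* (0, False) (1, False)" using assms unfolding graph_connected_def by blast
  from invariant[OF this] have "(1::int) mod int (gcd n (gcd i j)) = 0" by simp
  then have "int (gcd n (gcd i j)) dvd 1" by (simp add: mod_eq_0_iff_dvd)
  then show ?thesis by simp
qed

end


lemma par1: "even ((a::int) + b) \<Longrightarrow> (b + 1 - a) div 2 = (b - a) div 2" by presburger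
lemma par2: "odd ((a::int) + b) \<Longrightarrow> (b + 1 - a) div 2 = (b - a) div 2 + 1" by presburger
lemma par3: "odd ((a::int) + b) \<Longrightarrow> (b - (a + 1)) div 2 = (b - a) div 2" by presburger

locale hsetup = dsetup +
  assumes g1: "gcd n (gcd i j) = 1"
begin

definition M :: int where "M = int (gcd n i)"
definition Q :: int where "Q = int n div M"
definition P :: int where "P = 2 * Q"

lemma Mpos: "M > 0" unfolding M_def using i0 by simp
lemma MdN: "M dvd int n" unfolding M_def by simp
lemma MdI: "M dvd int i" unfolding M_def by simp
lemma NQ: "int n = M * Q" unfolding Q_def using MdN by simp
lemma Npos: "int n > 0" using n3 by simp
lemma Qpos: "Q > 0" using zero_less_mult_pos[of M Q] NQ Npos Mpos by simp
lemma Ppos: "P > 0" unfolding P_def using Qpos by simp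

lemma copMJ: "coprime M (int j)"
proof -
  have "gcd M (int j) = int (gcd (gcd n i) j)" unfolding M_def by simp
  also have "\<dots> = 1" using g1 by (simp add: gcd.assoc)
  finally show ?thesis by (simp add: coprime_iff_gcd_eq_1)
qed

lemma copQI: "coprime Q (int i div M)"
proof -
  have "gcd (int n) (int i) = M" unfolding M_def by simp
  then show ?thesis unfolding Q_def using div_gcd_coprime[of "int n" "int i"] Npos by simp
qed

lemma QI: "Q * int i = int n * (int i div M)"
proof -
  obtain k where k: "int i = M * k" using MdI by (rule dvdE)
  then have "int i div M = k" using Mpos by simp
  then show ?thesis using k NQ by (simp add: algebra_simps)
qed

lemma s_ex: "\<exists>s. int n dvd s * int i - M * int j"
proof -
  obtain u v where uv: "u * int n + v * int i = gcd (int n) (int i)" using bezout_int by blast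
  have gm: "gcd (int n) (int i) = M" unfolding M_def by simp
  have "(v * int j) * int i - M * int j = (v * int j) * int i - (u * int n + v * int i) * int j"
    using uv gm by simp
  also have "\<dots> = int n * (- u * int j)" by (simp add: algebra_simps)
  finally show ?thesis by (intro exI[of _ "v * int j"] dvdI)
qed

definition s :: int where "s = (SOME s. int n dvd s * int i - M * int j)"
lemma s_prop: "int n dvd s * int i - M * int j"
  unfolding s_def using s_ex by (rule someI_ex)

definition L :: int where "L = 2 * s - M"
lemma L_par: "L mod 2 = M mod 2" unfolding L_def by presburger

definition g :: "int \<times> int \<Rightarrow> int \<times> bool" where
  "g u = (case u of (a, b) \<Rightarrow> ((- a * int j - ((b - a) div 2) * int i) mod int n, odd (a + b)))"

abbreviation "V2 \<equiv> htg_verts M P"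

lemma g_carrier: "g u \<in> V"
  using Npos by (auto simp: g_def dcarrier split: prod.splits)

lemma g_shift: "g (a, b + k * P) = g (a, b)"
proof -
  have 1: "(b + k * P - a) div 2 = k * Q + (b - a) div 2"
  proof -
    have "b + k * P - a = (b - a) + (k * Q) * 2" unfolding P_def by (simp add: algebra_simps)
    then have "(b + k * P - a) div 2 = ((b - a) + (k * Q) * 2) div 2" by (simp only:)
    also have "\<dots> = k * Q + (b - a) div 2" by (rule div_mult_self1) simp
    finally show ?thesis .
  qed
  have 2: "(- a * int j - (k * Q + (b - a) div 2) * int i) mod int n
         = (- a * int j - ((b - a) div 2) * int i) mod int n"
  proof -
    have "(- a * int j - (k * Q + (b - a) div 2) * int i) - (- a * int j - ((b - a) div 2) * int i)
        = - k * (Q * int i)" by (simp add: algebra_simps)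
    also have "\<dots> = int n * (- k * (int i div M))" unfolding QI by (simp add: algebra_simps)
    finally have "(- a * int j - (k * Q + (b - a) div 2) * int i) - (- a * int j - ((b - a) div 2) * int i)
        = int n * (- k * (int i div M))" .
    then show ?thesis by (simp add: mod_eq_dvd_iff)
  qed
  have 3: "odd (a + (b + k * P)) = odd (a + b)" unfolding P_def by presburger
  show ?thesis unfolding g_def using 1 2 3 by simp
qed

lemma g_mod: "g (a, b mod P) = g (a, b)"
proof -
  have "g (a, b mod P + (b div P) * P) = g (a, b mod P)" by (rule g_shift)
  moreover have "b mod P + (b div P) * P = b" by (rule mod_div_mult_eq)
  ultimately show ?thesis by simp
qed

lemma g_mul: "g (a, b) \<otimes>\<^bsub>D\<^esub> (c, True) =
   ((- a * int j - ((b - a) div 2) * int i + (if odd (a + b) then - c else c)) mod int n, \<not> odd (a + b))"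
  unfolding g_def by (simp add: dmult mod_add_left_eq)

lemma modcong: "x = y \<Longrightarrow> x mod (m::int) = y mod m" by simp

lemma eqA: "even (a + b) \<Longrightarrow> g (a, b + 1) = g (a, b) \<otimes>\<^bsub>D\<^esub> (0, True)"
  unfolding g_mul using par1[of a b] by (simp add: g_def algebra_simps)

lemma eqB: "odd (a + b) \<Longrightarrow> g (a, b + 1) = g (a, b) \<otimes>\<^bsub>D\<^esub> (int i, True)"
  unfolding g_mul using par2[of a b] by (simp add: g_def algebra_simps) (rule modcong, linarith)

lemma eqC: "odd (a + b) \<Longrightarrow> g (a + 1, b) = g (a, b) \<otimes>\<^bsub>D\<^esub> (int j, True)"
  unfolding g_mul using par3[of a b] by (simp add: g_def algebra_simps)

lemma eqD:
  assumes "b mod 2 = M mod 2"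
  shows "g (0, b + L) = g (M - 1, b) \<otimes>\<^bsub>D\<^esub> (int j, True)"
proof -
  have p1: "odd (M - 1 + b)" using assms by presburger
  have p2: "even (b + L)" using assms unfolding L_def by presburger
  have t1: "(b - (M - 1)) div 2 = (b - M) div 2" using assms by presburger
  have t2: "(b + L) div 2 = s + (b - M) div 2" using assms unfolding L_def by presburger
  have "(- ((b + L) div 2) * int i) mod int n
      = (- (M - 1) * int j - ((b - (M - 1)) div 2) * int i + - int j) mod int n"
  proof -
    have "(- ((b + L) div 2) * int i) - (- (M - 1) * int j - ((b - (M - 1)) div 2) * int i + - int j)
        = - (s * int i - M * int j)"
      unfolding t1 t2 by (simp add: algebra_simps)
    moreover have "int n dvd - (s * int i - M * int j)" using s_prop by (simp only: dvd_minus_iff)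
    ultimately show ?thesis by (simp only: mod_eq_dvd_iff)
  qed
  then show ?thesis unfolding g_mul using p1 p2 by (simp add: g_def)
qed

end



context hsetup
begin

lemma V2_iff: "(a, b) \<in> V2 \<longleftrightarrow> 0 \<le> a \<and> a < M \<and> 0 \<le> b \<and> b < P"
  by (auto simp: htg_verts_def)

lemma g_inj: "inj_on g V2"
proof (rule inj_onI)
  fix u v assume u: "u \<in> V2" and v: "v \<in> V2" and e: "g u = g v"
  obtain a b where ab: "u = (a, b)" by fastforce
  obtain a' b' where ab': "v = (a', b')" by fastforce
  have r: "0 \<le> a" "a < M" "0 \<le> b" "b < P" "0 \<le> a'" "a' < M" "0 \<le> b'" "b' < P"
    using u v ab ab' by (auto simp: V2_iff)
  define t where "t = (b - a) div 2"
  define t' where "t' = (b' - a') div 2"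
  have par: "odd (a + b) = odd (a' + b')" using e ab ab' by (simp add: g_def)
  have "(- a * int j - t * int i) mod int n = (- a' * int j - t' * int i) mod int n"
    using e ab ab' by (simp add: g_def t_def t'_def)
  then have d: "int n dvd (a' - a) * int j + (t' - t) * int i"
    by (simp add: mod_eq_dvd_iff algebra_simps)
  then have "M dvd (a' - a) * int j + (t' - t) * int i" using MdN by (rule dvd_trans[rotated])
  moreover have "M dvd (t' - t) * int i" using MdI by simp
  ultimately have "M dvd (a' - a) * int j" by (simp add: dvd_add_left_iff)
  then have "M dvd (a' - a)" using copMJ by (simp add: coprime_dvd_mult_left_iff)
  then have "a mod M = a' mod M" by (simp add: mod_eq_dvd_iff dvd_diff_commute)
  then have aa: "a = a'" using r by simp
  with d have "int n dvd (t' - t) * int i" by simp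
  moreover obtain k where k: "int i = M * k" using MdI by (rule dvdE)
  ultimately have "M * Q dvd M * ((t' - t) * k)" using NQ by (simp add: algebra_simps)
  then have "Q dvd (t' - t) * k" using Mpos by simp
  moreover have "k = int i div M" using k Mpos by simp
  ultimately have "Q dvd (t' - t)" using copQI by (simp add: coprime_dvd_mult_left_iff)
  then have "2 * Q dvd 2 * (t' - t)" by (rule mult_dvd_mono[OF dvd_refl])
  moreover have "b' - b = 2 * (t' - t)" using par aa unfolding t_def t'_def by presburger
  ultimately have "P dvd b' - b" unfolding P_def by simp
  then have "b mod P = b' mod P" by (simp add: mod_eq_dvd_iff dvd_diff_commute)
  then have "b = b'" using r by simp
  then show "u = v" using ab ab' aa by simp
qed

lemma card_V2: "card V2 = 2 * n"
proof -
  have "card V2 = nat M * nat P" by (simp add: htg_verts_def card_cartesian_product)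
  also have "\<dots> = nat (M * P)" using Mpos Ppos by (simp add: nat_mult_distrib)
  also have "M * P = 2 * int n" unfolding P_def using NQ by simp
  finally show ?thesis by simp
qed

lemma card_V: "card V = 2 * n"
  by (simp add: dcarrier card_cartesian_product)

lemma g_bij: "bij_betw g V2 V"
proof -
  have fin: "finite V" by (simp add: dcarrier)
  have sub: "g ` V2 \<subseteq> V" using g_carrier by blast
  have "card (g ` V2) = card V" using card_image[OF g_inj] card_V2 card_V by simp
  then have "g ` V2 = V" using card_subset_eq[OF fin sub] by simp
  then show ?thesis using g_inj by (simp add: bij_betw_def)
qed

lemma mod_P_in: "0 \<le> x mod P \<and> x mod P < P" using Ppos by simp

lemma fwd:
  assumes "htg_edge M P L u v"
  shows "\<exists>c\<in>{0, int i, int j}. g v = g u \<otimes>\<^bsub>D\<^esub> (c, True)"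
proof -
  obtain a b where u: "u = (a, b)" by fastforce
  obtain a' b' where v: "v = (a', b')" by fastforce
  have "(a' = a \<and> b' = (b + 1) mod P) \<or> (a \<le> M - 2 \<and> odd (a + b) \<and> a' = a + 1 \<and> b' = b)
     \<or> (a = M - 1 \<and> b mod 2 = M mod 2 \<and> a' = 0 \<and> b' = (b + L) mod P)"
    using assms u v unfolding htg_edge_def by simp
  then show ?thesis
  proof (elim disjE conjE)
    assume "a' = a" "b' = (b + 1) mod P"
    then have "g v = g (a, b + 1)" using v g_mod by simp
    then show ?thesis using eqA[of a b] eqB[of a b] u by (cases "even (a + b)") auto
  next
    assume "odd (a + b)" "a' = a + 1" "b' = b"
    then show ?thesis using eqC[of a b] u v by auto
  next
    assume "a = M - 1" "b mod 2 = M mod 2" "a' = 0" "b' = (b + L) mod P"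
    then show ?thesis using eqD[of b] u v g_mod by auto
  qed
qed

lemma adj_g: "cayley_adj D S' (g u) (g v) \<longleftrightarrow> (\<exists>c\<in>{0, int i, int j}. g v = g u \<otimes>\<^bsub>D\<^esub> (c, True))"
  unfolding adj_iff using g_carrier by blast

lemma flip:
  assumes "g x = g y \<otimes>\<^bsub>D\<^esub> (c, True)"
  shows "g y = g x \<otimes>\<^bsub>D\<^esub> (c, True)"
  using assms inv2[OF g_carrier[of y]] by simp

lemma fwd_adj: "htg_adj M P L u v \<Longrightarrow> cayley_adj D S' (g u) (g v)"
  unfolding htg_adj_def adj_g using fwd flip by blast

lemma bwd:
  assumes u: "u \<in> V2" and c: "c \<in> {0, int i, int j}"
  shows "\<exists>w\<in>V2. htg_adj M P L u w \<and> g w = g u \<otimes>\<^bsub>D\<^esub> (c, True)"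
proof -
  obtain a b where ab: "u = (a, b)" by fastforce
  have r: "0 \<le> a" "a < M" "0 \<le> b" "b < P" using u ab by (auto simp: V2_iff)
  have P2: "(2::int) dvd P" unfolding P_def by simp
  have bm: "b mod P = b" using r by simp
  have up: "((b - 1) mod P + 1) mod P = b" using bm by (simp add: mod_add_left_eq)
  have wup: "(a, (b + 1) mod P) \<in> V2" "(a, (b - 1) mod P) \<in> V2" using r mod_P_in by (auto simp: V2_iff)
  have e_up: "htg_edge M P L (a, b) (a, (b + 1) mod P)" using u ab wup by (simp add: htg_edge_def)
  have e_dn: "htg_edge M P L (a, (b - 1) mod P) (a, b)" using u ab wup up by (simp add: htg_edge_def)
  have gup: "g (a, (b + 1) mod P) = g (a, b + 1)" by (rule g_mod)
  have gdn: "g (a, (b - 1) mod P) = g (a, b - 1)" by (rule g_mod)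
  have bb: "b - 1 + 1 = b" by simp
  consider "c = 0" | "c = int i" | "c = int j" using c by auto
  then show ?thesis
  proof cases
    case 1
    show ?thesis
    proof (cases "even (a + b)")
      case True
      then show ?thesis using eqA[of a b] e_up wup gup ab 1 unfolding htg_adj_def by metis
    next
      case False
      then have "even (a + (b - 1))" by presburger
      from eqA[OF this] have "g (a, b) = g (a, (b - 1) mod P) \<otimes>\<^bsub>D\<^esub> (0, True)" using gdn by simp
      then show ?thesis using flip e_dn wup ab 1 unfolding htg_adj_def by metis
    qed
  next
    case 2
    show ?thesis
    proof (cases "odd (a + b)")
      case True
      then show ?thesis using eqB[of a b] e_up wup gup ab 2 unfolding htg_adj_def by metis
    next
      case False
      then have "odd (a + (b - 1))" by presburger
      from eqB[OF this] have "g (a, b) = g (a, (b - 1) mod P) \<otimes>\<^bsub>D\<^esub> (int i, True)" using gdn by simp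
      then show ?thesis using flip e_dn wup ab 2 unfolding htg_adj_def by metis
    qed
  next
    case 3
    show ?thesis
    proof (cases "odd (a + b)")
      case True
      show ?thesis
      proof (cases "a \<le> M - 2")
        case le: True
        have w: "(a + 1, b) \<in> V2" using r le by (auto simp: V2_iff)
        have "htg_edge M P L (a, b) (a + 1, b)" using u ab w le True by (simp add: htg_edge_def)
        then show ?thesis using eqC[OF True] w ab 3 unfolding htg_adj_def by metis
      next
        case False
        then have am: "a = M - 1" using r by simp
        have bp: "b mod 2 = M mod 2" using True am by presburger
        have w: "(0, (b + L) mod P) \<in> V2" using Mpos mod_P_in by (auto simp: V2_iff)
        have "htg_edge M P L (a, b) (0, (b + L) mod P)" using u ab w am bp by (simp add: htg_edge_def)
        moreover have "g (0, (b + L) mod P) = g (a, b) \<otimes>\<^bsub>D\<^esub> (int j, True)"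
          using eqD[OF bp] g_mod am by simp
        ultimately show ?thesis using w ab 3 unfolding htg_adj_def by metis
      qed
    next
      case ev: False
      show ?thesis
      proof (cases "a \<ge> 1")
        case True
        have w: "(a - 1, b) \<in> V2" using r True by (auto simp: V2_iff)
        have o: "odd (a - 1 + b)" using ev by presburger
        have "htg_edge M P L (a - 1, b) (a, b)" using u ab w True o r by (simp add: htg_edge_def)
        moreover have "g (a, b) = g (a - 1, b) \<otimes>\<^bsub>D\<^esub> (int j, True)" using eqC[OF o] by simp
        ultimately show ?thesis using flip w ab 3 unfolding htg_adj_def by metis
      next
        case False
        then have a0: "a = 0" using r by simp
        have bp: "(b - L) mod 2 = M mod 2" using ev a0 L_par by presburger
        have bp2: "((b - L) mod P) mod 2 = M mod 2" using bp P2 by (simp add: mod_mod_cancel)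
        have w: "(M - 1, (b - L) mod P) \<in> V2" using Mpos mod_P_in by (auto simp: V2_iff)
        have up2: "((b - L) mod P + L) mod P = b" using bm by (simp add: mod_add_left_eq)
        have "htg_edge M P L (M - 1, (b - L) mod P) (a, b)" using u ab w a0 bp2 up2
          by (simp add: htg_edge_def)
        moreover have "g (a, b) = g (M - 1, (b - L) mod P) \<otimes>\<^bsub>D\<^esub> (int j, True)"
          using eqD[OF bp] g_mod a0 by simp
        ultimately show ?thesis using flip w ab 3 unfolding htg_adj_def by metis
      qed
    qed
  qed
qed

lemma iso_g:
  assumes "u \<in> V2" "v \<in> V2"
  shows "cayley_adj D S' (g u) (g v) \<longleftrightarrow> htg_adj M P L u v"
proof
  assume "cayley_adj D S' (g u) (g v)"
  then obtain c where c: "c \<in> {0, int i, int j}" "g v = g u \<otimes>\<^bsub>D\<^esub> (c, True)" unfolding adj_g by blast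
  obtain w where w: "w \<in> V2" "htg_adj M P L u w" "g w = g u \<otimes>\<^bsub>D\<^esub> (c, True)"
    using bwd[OF assms(1) c(1)] by blast
  have "w = v" using g_inj w(1) assms(2) w(3) c(2) by (metis inj_onD)
  then show "htg_adj M P L u v" using w by simp
next
  assume "htg_adj M P L u v"
  then show "cayley_adj D S' (g u) (g v)" by (rule fwd_adj)
qed

lemma iso: "graph_iso V (cayley_adj D S') V2 (htg_adj M P L)"
proof -
  define f where "f = the_inv_into V2 g"
  have bf: "bij_betw f V V2" unfolding f_def by (rule bij_betw_the_inv_into[OF g_bij])
  have gf: "\<And>x. x \<in> V \<Longrightarrow> g (f x) = x" unfolding f_def
    using f_the_inv_into_f_bij_betw[OF g_bij] by blast
  have fV: "\<And>x. x \<in> V \<Longrightarrow> f x \<in> V2" using bf by (meson bij_betwE)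
  have "\<forall>x\<in>V. \<forall>y\<in>V. cayley_adj D S' x y \<longleftrightarrow> htg_adj M P L (f x) (f y)"
  proof (intro ballI)
    fix x y assume x: "x \<in> V" and y: "y \<in> V"
    have "cayley_adj D S' x y \<longleftrightarrow> cayley_adj D S' (g (f x)) (g (f y))" using gf x y by simp
    also have "\<dots> \<longleftrightarrow> htg_adj M P L (f x) (f y)" using iso_g fV x y by blast
    finally show "cayley_adj D S' x y \<longleftrightarrow> htg_adj M P L (f x) (f y)" .
  qed
  then show ?thesis unfolding graph_iso_def using bf by blast
qed

end

theorem mainTheorem8:
  fixes n i j :: nat
  assumes "n \<ge> 3" and "0 < i" and "i < j" and "j < n"
  defines "S \<equiv> {dtau, drho [^]\<^bsub>dihedral n\<^esub> i \<otimes>\<^bsub>dihedral n\<^esub> dtau,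
                  drho [^]\<^bsub>dihedral n\<^esub> j \<otimes>\<^bsub>dihedral n\<^esub> dtau}"
  shows "(graph_connected (carrier (dihedral n)) (cayley_adj (dihedral n) S)
            \<longleftrightarrow> gcd n (gcd i j) = 1)
       \<and> (gcd n (gcd i j) = 1 \<longrightarrow>
            (let m = gcd n i in
              \<exists>l::int. l mod 2 = int m mod 2 \<and>
                graph_iso (carrier (dihedral n)) (cayley_adj (dihedral n) S)
                  (htg_verts (int m) (int (2 * n div m)))
                  (htg_adj (int m) (int (2 * n div m)) l)))"
proof -
  interpret dsetup n i j using assms by unfold_locales
  have S: "S = {(0, True), (int i, True), (int j, True)}"
    unfolding S_def using S_eq[of i n j] assms by simp
  have conn: "graph_connected (carrier (dihedral n)) (cayley_adj (dihedral n) S) \<longleftrightarrow> gcd n (gcd i j) = 1"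
    unfolding S
  proof
    assume "graph_connected (carrier (dihedral n)) (cayley_adj (dihedral n) {(0, True), (int i, True), (int j, True)})"
    then show "gcd n (gcd i j) = 1" by (rule connected_only_if)
  next
    assume "gcd n (gcd i j) = 1"
    then show "graph_connected (carrier (dihedral n)) (cayley_adj (dihedral n) {(0, True), (int i, True), (int j, True)})"
      by (rule connected_if)
  qed
  have iso: "gcd n (gcd i j) = 1 \<longrightarrow>
            (let m = gcd n i in
              \<exists>l::int. l mod 2 = int m mod 2 \<and>
                graph_iso (carrier (dihedral n)) (cayley_adj (dihedral n) S)
                  (htg_verts (int m) (int (2 * n div m)))
                  (htg_adj (int m) (int (2 * n div m)) l))"
  proof
    assume g: "gcd n (gcd i j) = 1"
    interpret hsetup n i j using g by unfold_locales
    have Mm: "int (gcd n i) = M" by (simp add: M_def)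
    have Pm: "int (2 * n div gcd n i) = P"
    proof -
      have "int (2 * n div gcd n i) = int (2 * n) div int (gcd n i)" by (rule zdiv_int)
      also have "\<dots> = (2 * int n) div M" by (simp add: M_def)
      also have "\<dots> = 2 * (int n div M)" using div_mult_swap[OF MdN, of 2] by simp
      finally show ?thesis by (simp add: P_def Q_def)
    qed
    show "let m = gcd n i in
              \<exists>l::int. l mod 2 = int m mod 2 \<and>
                graph_iso (carrier (dihedral n)) (cayley_adj (dihedral n) S)
                  (htg_verts (int m) (int (2 * n div m)))
                  (htg_adj (int m) (int (2 * n div m)) l)"
      unfolding Let_def Mm Pm S using hsetup.iso hsetup_axioms L_par by blast
  qed
  show ?thesis using conn iso by blast
qed

end
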